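(* Let $k$ be a positive integer and $\boldsymbol\beta$ a $k$-tuple of skew shapes whose shifted contents lie in $\{1,\dots,N\}$. Then the new variant combinatorial LLT polynomial satisfies $\mathcal G_{\boldsymbol\beta}(\mathbf x;q)=\sum_{t\ge0}q^tF_{\Gamma_k(\boldsymbol\beta,t)}(\mathbf x)$.
   Context: Skew shapes are drawn in English convention inside $\mathbb Z_{\ge1}\times\mathbb Z_{\ge1}$; content of cell $(a,b)$ is $b-a$; for $\boldsymbol\beta=\boldsymbol\mu/\boldsymbol\nu=(\beta^{(0)},\dots,\beta^{(k-1)})$ the shifted content of $z\in\beta^{(r)}$ is $c(z)k+r$. $\mathcal U=\mathbb Z\langle u_1,\dots,u_N\rangle$ acts on the right on $\mathbb Z\mathbb Y^k$ ($\mathbb Y$ = Young diagrams): $u_{ck+r}$ ($0\le r<k$) adds a cell of content $c$ to the $r$-th diagram if this gives a diagram, and gives $0$ otherwise. $W^{(k)}(\boldsymbol\beta)=\{\mathsf v:\boldsymbol\nu\cdot u_{\mathsf v_1}\cdots u_{\mathsf v_n}=\boldsymbol\mu\}$; $\mathrm{inv}_k(\mathsf v)=|\{(i,j):i<j,0<\mathsf v_i-\mathsf v_j<k\}|$. $\mathcal G_{\boldsymbol\beta}(\mathbf x;q)=\sum_{\mathsf v\in W^{(k)}(\boldsymbol\beta)}q^{\mathrm{inv}_k(\mathsf v)}Q_{\mathrm{Des}(\mathsf v)}(\mathbf x)$, where $\mathrm{Des}(\mathsf v)=\{i:\mathsf v_i>\mathsf v_{i+1}\}$ and $Q_D$ is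 Gessel's fundamental quasisymmetric function. $\Gamma_k(\boldsymbol\beta,t)$ is the unique Assaf switchboard of level $k$ with vertex set $\{\mathsf v\in W^{(k)}(\boldsymbol\beta):\mathrm{inv}_k(\mathsf v)=t\}$ (an Assaf switchboard of level $k$: edge-labeled graph on nonzero $k$-words of a fixed length $n$, labels in $\{2,\dots,n-1\}$, each $i$-edge a switch in positions $i-1,i,i+1$ of the form $\{bac,bca\}$ or $\{acb,cab\}$ with $a<b<c$, $c-a>k$, or $\{bac,acb\}$ or $\{bca,cab\}$ with $a<b<c$, $c-a\le k$, every vertex with exactly one descent among positions $i-1,i$ lying on exactly one $i$-edge). For a switchboard $\Gamma$, $F_\Gamma=\sum_{\mathsf w\in V(\Gamma)}Q_{\mathrm{Des}(\mathsf w)}$. *)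

theory Defs
  imports "HOL-Computational_Algebra.Polynomial"
begin

(* Young diagrams in English convention inside Z_{>=1} x Z_{>=1}: finite sets of cells (row, column) *)
definition young :: "(nat \<times> nat) set \<Rightarrow> bool" where
  "young D \<longleftrightarrow> finite D \<and>
     (\<forall>(a,b)\<in>D. 1 \<le> a \<and> 1 \<le> b \<and>
        (\<forall>a' b'. 1 \<le> a' \<and> a' \<le> a \<and> 1 \<le> b' \<and> b' \<le> b \<longrightarrow> (a',b') \<in> D))"

definition content :: "nat \<times> nat \<Rightarrow> int" where
  "content z = int (snd z) - int (fst z)"

(* one step of the right action of u_m on k-tuples of Young diagrams (lists of length k):
   m = c*k + r with 0 <= r < k; u_m adds a cell of content c to the r-th diagram,
   provided the result is a diagram (otherwise the result is 0, i.e. no step exists) *)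
definition act_step :: "nat \<Rightarrow> (nat \<times> nat) set list \<Rightarrow> nat \<Rightarrow> (nat \<times> nat) set list \<Rightarrow> bool" where
  "act_step k lam m lam' \<longleftrightarrow>
     (\<exists>z. z \<notin> lam ! (m mod k) \<and> content z = int (m div k) \<and>
          young (insert z (lam ! (m mod k))) \<and>
          lam' = lam[m mod k := insert z (lam ! (m mod k))])"

definition Wk :: "nat \<Rightarrow> nat \<Rightarrow> (nat \<times> nat) set list \<Rightarrow> (nat \<times> nat) set list \<Rightarrow> nat list set" where
  "Wk k N mu nu = {v. set v \<subseteq> {1..N} \<and>
     (\<exists>lams. length lams = length v + 1 \<and> lams ! 0 = nu \<and> lams ! (length v) = mu \<and>
        (\<forall>i<length v. act_step k (lams ! i) (v ! i) (lams ! (i+1))))}"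

definition inv_k :: "nat \<Rightarrow> nat list \<Rightarrow> nat" where
  "inv_k k v = card {(i,j). i < j \<and> j < length v \<and> v ! j < v ! i \<and> v ! i < v ! j + k}"

(* descent set, positions 1-based: Des(v) = {i : v_i > v_{i+1}} *)
definition Des :: "nat list \<Rightarrow> nat set" where
  "Des v = {i. 1 \<le> i \<and> i < length v \<and> v ! i < v ! (i - 1)}"

(* Formal power series in x_1, x_2, ... with integer coefficients are represented by their
   coefficient function on monomials x^alpha (alpha : nat => nat, alpha i = exponent of x_i). *)

definition gessel_Q :: "nat \<Rightarrow> nat set \<Rightarrow> (nat \<Rightarrow> nat) \<Rightarrow> int" where
  "gessel_Q n D alpha = int (card {s. length s = n \<and> (\<forall>j<n. 1 \<le> s ! j) \<and>
      (\<forall>j. 1 \<le> j \<and> j < n \<longrightarrow> s ! (j - 1) \<le> s ! j \<and> (j \<in> D \<longrightarrow> s ! (j - 1) < s ! j)) \<and>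
      (\<forall>x. count_list s x = alpha x)})"

definition LLT_G :: "nat \<Rightarrow> nat \<Rightarrow> (nat \<times> nat) set list \<Rightarrow> (nat \<times> nat) set list \<Rightarrow> (nat \<Rightarrow> nat) \<Rightarrow> int poly" where
  "LLT_G k N mu nu alpha = (\<Sum>v\<in>Wk k N mu nu. monom (gessel_Q (length v) (Des v) alpha) (inv_k k v))"

(* switches: triples in positions i-1,i,i+1 (1-based) *)
definition trip :: "nat list \<Rightarrow> nat \<Rightarrow> nat list" where
  "trip w i = [w ! (i - 2), w ! (i - 1), w ! i]"

definition is_switch :: "nat \<Rightarrow> nat \<Rightarrow> nat list \<Rightarrow> nat list \<Rightarrow> bool" where
  "is_switch k i w w' \<longleftrightarrow> length w = length w' \<and> 2 \<le> i \<and> i + 1 \<le> length w \<and>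
     (\<forall>j<length w. j \<notin> {i - 2, i - 1, i} \<longrightarrow> w ! j = w' ! j) \<and>
     (\<exists>a b c. a < b \<and> b < c \<and>
        ((c - a > k \<and> ({trip w i, trip w' i} = {[b,a,c],[b,c,a]} \<or> {trip w i, trip w' i} = {[a,c,b],[c,a,b]})) \<or>
         (c - a \<le> k \<and> ({trip w i, trip w' i} = {[b,a,c],[a,c,b]} \<or> {trip w i, trip w' i} = {[b,c,a],[c,a,b]}))))"

(* exactly one descent among positions i-1, i (1-based) *)
definition one_descent :: "nat list \<Rightarrow> nat \<Rightarrow> bool" where
  "one_descent w i \<longleftrightarrow> ((w ! (i - 1) < w ! (i - 2)) \<noteq> (w ! i < w ! (i - 1)))"

(* A switchboard is a pair (V, E); an i-edge is (i, {w, w'}). *)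
type_synonym switchboard = "nat list set \<times> (nat \<times> nat list set) set"

definition assaf_switchboard_n :: "nat \<Rightarrow> nat \<Rightarrow> switchboard \<Rightarrow> bool" where
  "assaf_switchboard_n k n G \<longleftrightarrow>
     (\<forall>w\<in>fst G. length w = n \<and> (\<forall>x\<in>set w. x \<noteq> 0)) \<and>
     (\<forall>(i,e)\<in>snd G. 2 \<le> i \<and> i \<le> n - 1 \<and>
        (\<exists>w w'. e = {w, w'} \<and> w \<in> fst G \<and> w' \<in> fst G \<and> is_switch k i w w')) \<and>
     (\<forall>w\<in>fst G. \<forall>i. 2 \<le> i \<and> i \<le> n - 1 \<and> one_descent w i \<longrightarrow>
        (\<exists>!e. (i,e) \<in> snd G \<and> w \<in> e))"

definition assaf_switchboard :: "nat \<Rightarrow> switchboard \<Rightarrow> bool" where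
  "assaf_switchboard k G \<longleftrightarrow> (\<exists>n. assaf_switchboard_n k n G)"

definition Gamma_k :: "nat \<Rightarrow> nat \<Rightarrow> (nat \<times> nat) set list \<Rightarrow> (nat \<times> nat) set list \<Rightarrow> nat \<Rightarrow> switchboard" where
  "Gamma_k k N mu nu t = (THE G. assaf_switchboard k G \<and> fst G = {v \<in> Wk k N mu nu. inv_k k v = t})"

definition F_sb :: "switchboard \<Rightarrow> (nat \<Rightarrow> nat) \<Rightarrow> int" where
  "F_sb G alpha = (\<Sum>w\<in>fst G. gessel_Q (length w) (Des w) alpha)"

end

theory Submission
  imports Defs "HOL-Library.Multiset"
begin


fun reach :: "nat \<Rightarrow> (nat \<times> nat) set list \<Rightarrow> nat list \<Rightarrow> (nat \<times> nat) set list \<Rightarrow> bool" where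
  "reach k L [] L' = (L' = L)"
| "reach k L (x#v) L' = (\<exists>L1. act_step k L x L1 \<and> reach k L1 v L')"

lemma reach_append: "reach k L (u@v) L' \<longleftrightarrow> (\<exists>M. reach k L u M \<and> reach k M v L')"
  by (induction u arbitrary: L) auto

lemma lams_reach:
  "(\<exists>lams. length lams = length v + 1 \<and> lams ! 0 = L \<and> lams ! (length v) = L' \<and>
      (\<forall>i<length v. act_step k (lams ! i) (v ! i) (lams ! (i+1)))) \<longleftrightarrow> reach k L v L'"
proof (induction v arbitrary: L)
  case Nil
  then show ?case
    by (auto intro!: exI[of _ "[L]"])
next
  case (Cons x v)
  show ?case
  proof
    assume "\<exists>lams. length lams = length (x#v) + 1 \<and> lams ! 0 = L \<and> lams ! (length (x#v)) = L' \<and>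
      (\<forall>i<length (x#v). act_step k (lams ! i) ((x#v) ! i) (lams ! (i+1)))"
    then obtain lams where l: "length lams = length (x#v) + 1" "lams ! 0 = L" "lams ! (length (x#v)) = L'"
      "\<forall>i<length (x#v). act_step k (lams ! i) ((x#v) ! i) (lams ! (i+1))" by blast
    have "act_step k L x (lams ! 1)" using l(2,4) by (metis One_nat_def add_0 length_Cons nth_Cons_0 zero_less_Suc)
    moreover have "reach k (lams ! 1) v L'"
      unfolding Cons.IH[symmetric]
      apply (rule exI[of _ "tl lams"])
      using l by (auto simp: nth_tl)
    ultimately show "reach k L (x#v) L'" by auto
  next
    assume "reach k L (x#v) L'"
    then obtain L1 where a: "act_step k L x L1" and "reach k L1 v L'" by auto
    then obtain lams where l: "length lams = length v + 1" "lams ! 0 = L1" "lams ! (length v) = L'"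
      "\<forall>i<length v. act_step k (lams ! i) (v ! i) (lams ! (i+1))" using Cons.IH by blast
    show "\<exists>lams. length lams = length (x#v) + 1 \<and> lams ! 0 = L \<and> lams ! (length (x#v)) = L' \<and>
      (\<forall>i<length (x#v). act_step k (lams ! i) ((x#v) ! i) (lams ! (i+1)))"
      apply (rule exI[of _ "L # lams"])
      using l a by (auto simp: nth_Cons split: nat.splits)
  qed
qed

lemma Wk_reach: "v \<in> Wk k N mu nu \<longleftrightarrow> set v \<subseteq> {1..N} \<and> reach k nu v mu"
  unfolding Wk_def lams_reach by simp

definition good :: "nat \<Rightarrow> (nat \<times> nat) set list \<Rightarrow> bool" where
  "good k L \<longleftrightarrow> length L = k \<and> (\<forall>r<k. young (L ! r))"

definition tot :: "(nat \<times> nat) set list \<Rightarrow> nat" where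
  "tot L = sum_list (map card L)"

lemma young_finite: "young D \<Longrightarrow> finite D" by (simp add: young_def)

lemma young_closed: "young D \<Longrightarrow> (a,b) \<in> D \<Longrightarrow> 1 \<le> a' \<Longrightarrow> a' \<le> a \<Longrightarrow> 1 \<le> b' \<Longrightarrow> b' \<le> b \<Longrightarrow> (a',b') \<in> D"
  unfolding young_def by blast

lemma young_pos: "young D \<Longrightarrow> (a,b) \<in> D \<Longrightarrow> 1 \<le> a \<and> 1 \<le> b"
  unfolding young_def by blast

lemma act_stepE:
  assumes "act_step k L m L'"
  obtains z where "z \<notin> L ! (m mod k)" "content z = int (m div k)"
    "young (insert z (L ! (m mod k)))" "L' = L[m mod k := insert z (L ! (m mod k))]"
  using assms unfolding act_step_def by blast

lemma act_good: "0 < k \<Longrightarrow> good k L \<Longrightarrow> act_step k L m L' \<Longrightarrow> good k L'"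
  by (elim act_stepE) (auto simp: good_def nth_list_update)

lemma sum_list_upd_nat: "i < length xs \<Longrightarrow> sum_list (xs[i := x]) + xs ! i = sum_list xs + (x::nat)"
proof (induction xs arbitrary: i)
  case (Cons a xs) then show ?case by (cases i) auto
qed simp

lemma act_tot: "0 < k \<Longrightarrow> good k L \<Longrightarrow> act_step k L m L' \<Longrightarrow> tot L' = Suc (tot L)"
proof (elim act_stepE)
  fix z assume k: "0 < k" and g: "good k L" and z: "z \<notin> L ! (m mod k)"
    and L': "L' = L[m mod k := insert z (L ! (m mod k))]"
  have r: "m mod k < length L" using k g by (simp add: good_def)
  have f: "finite (L ! (m mod k))" using g k by (auto simp: good_def intro: young_finite)
  have "tot L' + card (L ! (m mod k)) = tot L + card (insert z (L ! (m mod k)))"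
    unfolding tot_def L' map_update using sum_list_upd_nat[of "m mod k" "map card L"] r by simp
  then show ?thesis using f z by simp
qed

lemma reach_good_tot: "reach k L v L' \<Longrightarrow> 0 < k \<Longrightarrow> good k L \<Longrightarrow> good k L' \<and> tot L' = tot L + length v"
proof (induction v arbitrary: L)
  case (Cons x v)
  then obtain L1 where "act_step k L x L1" "reach k L1 v L'" by auto
  with Cons act_good[of k L x L1] act_tot[of k L x L1] show ?case by auto
qed simp



lemma geo:
  assumes yD: "young D" and zD: "z \<notin> D" and y1: "young (insert z D)"
    and y2: "young (insert y (insert z D))"
    and z'n: "z' \<notin> insert y (insert z D)" and y3: "young (insert z' (insert y (insert z D)))"
    and c: "content z' = content z"
  shows False
proof -
  obtain a b where z: "z = (a,b)" by force
  obtain a' b' where z': "z' = (a',b')" by force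
  have c': "int b - int a = int b' - int a'" using c by (simp add: content_def z z')
  have p: "1 \<le> a" "1 \<le> b" using young_pos[OF y1, of a b] z by auto
  have p': "1 \<le> a'" "1 \<le> b'" using young_pos[OF y3, of a' b'] z' by auto
  consider "a' = a" | "a' < a" | "a < a'" by linarith
  then show False
  proof cases
    case 1 then show False using c' z z' z'n by auto
  next
    case 2
    have "(a',b') \<in> insert y (insert z D)"
      by (rule young_closed[OF y2, of a b]) (use z 2 c' p' in auto)
    then show False using z' z'n by auto
  next
    case 3
    have e1: "(a, b+1) \<in> insert z' (insert y (insert z D))"
      by (rule young_closed[OF y3, of a' b']) (use z' 3 c' p in auto)
    have e2: "(a+1, b) \<in> insert z' (insert y (insert z D))"
      by (rule young_closed[OF y3, of a' b']) (use z' 3 c' p in auto)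
    have "(a, b+1) \<in> D \<or> (a+1,b) \<in> D" using e1 e2 z z' 3 c' by auto
    then have "(a,b) \<in> D" using young_closed[OF yD] p by (metis le_add1 order_refl)
    then show False using zD z by simp
  qed
qed

lemma no_repeat1:
  assumes k: "0 < k" and g: "good k L" and a1: "act_step k L x L1" and a2: "act_step k L1 x L2"
  shows False
proof -
  let ?r = "x mod k"
  have r: "?r < length L" using k g by (simp add: good_def)
  obtain z where z: "z \<notin> L ! ?r" "content z = int (x div k)" "young (insert z (L ! ?r))"
    "L1 = L[?r := insert z (L ! ?r)]" using a1 by (rule act_stepE)
  obtain z' where z': "z' \<notin> L1 ! ?r" "content z' = int (x div k)" "young (insert z' (L1 ! ?r))"
    using a2 by (rule act_stepE)
  have yD: "young (L ! ?r)" using g k by (simp add: good_def)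
  have "L1 ! ?r = insert z (L ! ?r)" using z(4) r by simp
  then show False using geo[OF yD z(1) z(3), of z z'] z z' by (simp add: insert_absorb)
qed

lemma no_repeat2:
  assumes k: "0 < k" and g: "good k L" and a1: "act_step k L x L1" and a2: "act_step k L1 y L2"
    and a3: "act_step k L2 x L3"
  shows False
proof -
  let ?r = "x mod k"
  have r: "?r < length L" using k g by (simp add: good_def)
  obtain z where z: "z \<notin> L ! ?r" "content z = int (x div k)" "young (insert z (L ! ?r))"
    "L1 = L[?r := insert z (L ! ?r)]" using a1 by (rule act_stepE)
  obtain z2 where z2: "z2 \<notin> L1 ! (y mod k)" "young (insert z2 (L1 ! (y mod k)))"
    "L2 = L1[y mod k := insert z2 (L1 ! (y mod k))]" using a2 by (rule act_stepE)
  obtain z' where z': "z' \<notin> L2 ! ?r" "content z' = int (x div k)" "young (insert z' (L2 ! ?r))"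
    using a3 by (rule act_stepE)
  have yD: "young (L ! ?r)" using g k by (simp add: good_def)
  have L1r: "L1 ! ?r = insert z (L ! ?r)" using z(4) r by simp
  show False
  proof (cases "y mod k = ?r")
    case True
    have "L2 ! ?r = insert z2 (insert z (L ! ?r))" using z2(3) L1r True r z(4) by simp
    then show ?thesis using geo[OF yD z(1) z(3), of z2 z'] z z' z2 L1r True by simp
  next
    case False
    have "L2 ! ?r = insert z (L ! ?r)" using z2(3) L1r False by simp
    then show ?thesis using geo[OF yD z(1) z(3), of z z'] z z' by (simp add: insert_absorb)
  qed
qed

lemma young_drop:
  assumes yD: "young D" and zD: "z \<notin> D" and y2: "young (insert z2 (insert z D))"
    and c: "content z2 \<noteq> content z" "content z2 \<noteq> content z + 1" "content z2 \<noteq> content z - 1"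
  shows "young (insert z2 D)"
  unfolding young_def
proof (intro conjI ballI allI impI)
  show "finite (insert z2 D)" using young_finite[OF yD] by simp
next
  fix c assume cm: "c \<in> insert z2 D"
  obtain a b where cc: "c = (a,b)" by force
  have pos: "1 \<le> a \<and> 1 \<le> b" using young_pos[OF y2, of a b] cm cc by auto
  have cl: "\<forall>a' b'. 1 \<le> a' \<and> a' \<le> a \<and> 1 \<le> b' \<and> b' \<le> b \<longrightarrow> (a', b') \<in> insert z2 D"
  proof (intro allI impI)
    fix a' b' assume h: "1 \<le> a' \<and> a' \<le> a \<and> 1 \<le> b' \<and> b' \<le> b"
    show "(a', b') \<in> insert z2 D"
    proof (cases "c \<in> D")
      case True then show ?thesis using young_closed[OF yD, of a b a' b'] h cc by auto
    next
      case False
      then have cz2: "c = z2" using cm by auto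
      have inb: "(a',b') \<in> insert z2 (insert z D)" using young_closed[OF y2, of a b a' b'] h cc cz2 by auto
      show ?thesis
      proof (cases "(a',b') = z")
        case False then show ?thesis using inb by auto
      next
        case True
        have neq: "(a',b') \<noteq> (a,b)" using True cz2 cc c(1) by auto
        show ?thesis
        proof (cases "a' < a")
          case lt: True
          have "(a'+1, b') \<in> insert z2 (insert z D)" using young_closed[OF y2, of a b] h cc cz2 lt by auto
          moreover have "(a'+1,b') \<noteq> z2" using c(3) True cz2 cc by (auto simp: content_def)
          moreover have "(a'+1,b') \<noteq> z" using True by auto
          ultimately have "(a'+1,b') \<in> D" by auto
          then have "(a',b') \<in> D" using young_closed[OF yD, of "a'+1" b' a' b'] h by auto
          then show ?thesis using True zD by auto
        next
          case ge: False
          then have bb: "b' < b" using neq h by auto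
          have "(a', b'+1) \<in> insert z2 (insert z D)" using young_closed[OF y2, of a b] h cc cz2 bb by auto
          moreover have "(a',b'+1) \<noteq> z2" using c(2) True cz2 cc by (auto simp: content_def)
          moreover have "(a',b'+1) \<noteq> z" using True by auto
          ultimately have "(a',b'+1) \<in> D" by auto
          then have "(a',b') \<in> D" using young_closed[OF yD, of a' "b'+1" a' b'] h by auto
          then show ?thesis using True zD by auto
        qed
      qed
    qed
  qed
  show "case c of (a, b) \<Rightarrow> 1 \<le> a \<and> 1 \<le> b \<and>
      (\<forall>a' b'. 1 \<le> a' \<and> a' \<le> a \<and> 1 \<le> b' \<and> b' \<le> b \<longrightarrow> (a', b') \<in> insert z2 D)"
    using pos cl cc by simp
qed

definition comm :: "nat \<Rightarrow> nat \<Rightarrow> nat \<Rightarrow> bool" where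
  "comm k x y \<longleftrightarrow> x mod k \<noteq> y mod k \<or> 2 \<le> \<bar>int (x div k) - int (y div k)\<bar>"

lemma commute:
  assumes k: "0 < k" and g: "good k L" and a1: "act_step k L x L1" and a2: "act_step k L1 y L2"
    and cm: "comm k x y"
  shows "\<exists>L1'. act_step k L y L1' \<and> act_step k L1' x L2"
proof -
  let ?r = "x mod k" and ?s = "y mod k"
  have r: "?r < length L" "?s < length L" using k g by (auto simp: good_def)
  obtain z where z: "z \<notin> L ! ?r" "content z = int (x div k)" "young (insert z (L ! ?r))"
    "L1 = L[?r := insert z (L ! ?r)]" using a1 by (rule act_stepE)
  obtain z2 where z2: "z2 \<notin> L1 ! ?s" "content z2 = int (y div k)" "young (insert z2 (L1 ! ?s))"
    "L2 = L1[?s := insert z2 (L1 ! ?s)]" using a2 by (rule act_stepE)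
  show ?thesis
  proof (cases "?r = ?s")
    case False
    have L1s: "L1 ! ?s = L ! ?s" using z(4) False by simp
    let ?M = "L[?s := insert z2 (L ! ?s)]"
    have "act_step k L y ?M" unfolding act_step_def by (rule exI[of _ z2]) (use z2 L1s in auto)
    moreover have "act_step k ?M x L2" unfolding act_step_def
      by (rule exI[of _ z]) (use z z2 L1s False r in \<open>auto intro: list_update_swap\<close>)
    ultimately show ?thesis by blast
  next
    case True
    have yD: "young (L ! ?r)" using g k by (simp add: good_def)
    have L1s: "L1 ! ?s = insert z (L ! ?r)" using z(4) r True by simp
    have cd: "2 \<le> \<bar>content z - content z2\<bar>" using cm True z z2 by (simp add: comm_def)
    have yy: "young (insert z2 (L ! ?r))"
      by (rule young_drop[OF yD z(1), of z2]) (use z2 L1s cd in auto)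
    let ?M = "L[?r := insert z2 (L ! ?r)]"
    have "act_step k L y ?M" unfolding act_step_def by (rule exI[of _ z2]) (use z2 L1s yy True in auto)
    moreover have "act_step k ?M x L2" unfolding act_step_def
      by (rule exI[of _ z]) (use z z2 L1s True r cd yy in \<open>auto simp: insert_commute\<close>)
    ultimately show ?thesis by blast
  qed
qed

lemma comm_lt: "0 < k \<Longrightarrow> x < y \<Longrightarrow> y < x + k \<Longrightarrow> comm k x y"
proof -
  assume k: "0 < k" and xy: "x < y" "y < x + k"
  have "x mod k \<noteq> y mod k"
  proof
    assume "x mod k = y mod k"
    then have "k dvd y - x" using xy mod_eq_dvd_iff_nat[of x y k] by simp
    then have "k \<le> y - x" using xy by (simp add: dvd_imp_le)
    then show False using xy by simp
  qed
  then show ?thesis by (simp add: comm_def)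
qed

lemma comm_gt: "0 < k \<Longrightarrow> x + k < y \<Longrightarrow> comm k x y"
proof (rule ccontr)
  assume k: "0 < k" and xy: "x + k < y" and n: "\<not> comm k x y"
  then have m: "x mod k = y mod k" and d: "int (y div k) \<le> int (x div k) + 1" by (auto simp: comm_def)
  have "y div k \<le> x div k + 1" using d by simp
  then have "k * (y div k) \<le> k * (x div k) + k" by (metis mult.commute mult_Suc mult_le_mono1 Suc_eq_plus1 add.commute)
  moreover have "y = k*(y div k) + y mod k" "x = k*(x div k) + x mod k" by simp_all
  ultimately show False using xy m by linarith
qed

lemma comm_sym: "comm k x y \<Longrightarrow> comm k y x"
  unfolding comm_def by auto



lemma reach_swap12:
  assumes "0 < k" "good k L" "comm k x y" "reach k L (x#y#v) L'"
  shows "reach k L (y#x#v) L'"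
proof -
  from assms(4) obtain L1 L2 where "act_step k L x L1" "act_step k L1 y L2" "reach k L2 v L'" by auto
  with commute[OF assms(1,2)] assms(3) obtain M where "act_step k L y M" "act_step k M x L2" by blast
  with \<open>reach k L2 v L'\<close> show ?thesis by auto
qed

lemma reach_swap23:
  assumes "0 < k" "good k L" "comm k y z" "reach k L (x#y#z#v) L'"
  shows "reach k L (x#z#y#v) L'"
proof -
  from assms(4) obtain L1 where "act_step k L x L1" "reach k L1 (y#z#v) L'" by auto
  moreover have "good k L1" using act_good assms(1,2) calculation(1) by blast
  ultimately have "reach k L1 (z#y#v) L'" using reach_swap12[OF assms(1) _ assms(3)] by blast
  with \<open>act_step k L x L1\<close> show ?thesis by auto
qed

definition valid3 :: "nat list \<Rightarrow> bool" where
  "valid3 T \<longleftrightarrow> (\<exists>p q r. T = [p,q,r] \<and> ((q<p \<and> p<r) \<or> (r<p \<and> p<q) \<or> (p<r \<and> r<q) \<or> (q<r \<and> r<p)))"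

fun sw :: "nat \<Rightarrow> nat list \<Rightarrow> nat list" where
  "sw k [p,q,r] = (if q<p \<and> p<r then (if r-q>k then [p,r,q] else [q,r,p])
  else if r<p \<and> p<q then (if q-r>k then [p,r,q] else [q,r,p])
  else if p<r \<and> r<q then (if q-p>k then [q,p,r] else [r,p,q])
  else if q<r \<and> r<p then (if p-q>k then [q,p,r] else [r,p,q]) else [p,q,r])"
| "sw k T = T"

lemma sw_valid: "valid3 T \<Longrightarrow> valid3 (sw k T) \<and> sw k (sw k T) = T"
  unfolding valid3_def by (elim exE conjE disjE) auto


lemma sw_mset: "mset (sw k T) = mset T"
  by (induction k T rule: sw.induct) (auto simp: add_mset_commute)

lemma reach_sw:
  assumes k: "0 < k" and g: "good k L" and v: "valid3 T" and r: "reach k L (T @ v) L'"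
  shows "reach k L (sw k T @ v) L'"
proof -
  obtain p q r where T: "T = [p,q,r]" and c: "(q<p \<and> p<r) \<or> (r<p \<and> p<q) \<or> (p<r \<and> r<q) \<or> (q<r \<and> r<p)"
    using v unfolding valid3_def by blast
  have R: "reach k L (p#q#r#v) L'" using r T by simp
  note s12 = reach_swap12[OF k g] and s23 = reach_swap23[OF k g]
  note cl = comm_lt[OF k] comm_gt[OF k] comm_sym
  from c show ?thesis
  proof (elim disjE conjE)
    assume h: "q<p" "p<r"
    show ?thesis
    proof (cases "r - q > k")
      case True then show ?thesis using T h s23[OF _ R] cl by auto
    next
      case False
      have "reach k L (q#p#r#v) L'" using s12[OF _ R] h False cl by auto
      then have "reach k L (q#r#p#v) L'" by (rule s23[rotated]) (use h False cl in auto)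
      then show ?thesis using T h False by auto
    qed
  next
    assume h: "r<p" "p<q"
    show ?thesis
    proof (cases "q - r > k")
      case True then show ?thesis using T h s23[OF _ R] cl by auto
    next
      case False
      have "reach k L (q#p#r#v) L'" using s12[OF _ R] h False cl by auto
      then have "reach k L (q#r#p#v) L'" by (rule s23[rotated]) (use h False cl in auto)
      then show ?thesis using T h False by auto
    qed
  next
    assume h: "p<r" "r<q"
    show ?thesis
    proof (cases "q - p > k")
      case True then show ?thesis using T h s12[OF _ R] cl by auto
    next
      case False
      have "reach k L (p#r#q#v) L'" using s23[OF _ R] h False cl by auto
      then have "reach k L (r#p#q#v) L'" by (rule s12[rotated]) (use h False cl in auto)
      then show ?thesis using T h False by auto
    qed
  next
    assume h: "q<r" "r<p"
    show ?thesis
    proof (cases "p - q > k")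
      case True then show ?thesis using T h s12[OF _ R] cl by auto
    next
      case False
      have "reach k L (p#r#q#v) L'" using s23[OF _ R] h False cl by auto
      then have "reach k L (r#p#q#v) L'" by (rule s12[rotated]) (use h False cl in auto)
      then show ?thesis using T h False by auto
    qed
  qed
qed



fun invr :: "nat \<Rightarrow> nat list \<Rightarrow> nat" where
  "invr k [] = 0"
| "invr k (x#xs) = length (filter (\<lambda>y. y < x \<and> x < y + k) xs) + invr k xs"

lemma inv_k_Cons_set:
  "{(i,j). i < j \<and> j < length (x#xs) \<and> (x#xs) ! j < (x#xs) ! i \<and> (x#xs) ! i < (x#xs) ! j + k}
   = (\<lambda>j. (0, Suc j)) ` {j. j < length xs \<and> xs ! j < x \<and> x < xs ! j + k}
     \<union> (\<lambda>(i,j). (Suc i, Suc j)) ` {(i,j). i < j \<and> j < length xs \<and> xs ! j < xs ! i \<and> xs ! i < xs ! j + k}"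
  (is "?L = ?A \<union> ?B")
proof
  show "?L \<subseteq> ?A \<union> ?B"
  proof
    fix p assume "p \<in> ?L"
    then obtain i j where p: "p = (i,j)" "i < j" "j < Suc (length xs)"
      "(x#xs) ! j < (x#xs) ! i" "(x#xs) ! i < (x#xs) ! j + k" by auto
    then obtain j' where j: "j = Suc j'" by (cases j) auto
    show "p \<in> ?A \<union> ?B"
    proof (cases i)
      case 0 then show ?thesis using p j by auto
    next
      case (Suc i')
      then have "(i',j') \<in> {(i,j). i < j \<and> j < length xs \<and> xs ! j < xs ! i \<and> xs ! i < xs ! j + k}"
        using p j by auto
      then show ?thesis using p j Suc by (auto intro: image_eqI[of _ _ "(i',j')"])
    qed
  qed
  have "?A \<subseteq> ?L" by (rule image_subsetI) simp
  moreover have "?B \<subseteq> ?L"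
  proof
    fix p assume "p \<in> ?B"
    then obtain q where q: "q \<in> {(i,j). i < j \<and> j < length xs \<and> xs ! j < xs ! i \<and> xs ! i < xs ! j + k}"
      "p = (\<lambda>(i,j). (Suc i, Suc j)) q" by (rule imageE)
    obtain i j where "q = (i,j)" by force
    then show "p \<in> ?L" using q by simp
  qed
  ultimately show "?A \<union> ?B \<subseteq> ?L" by blast
qed

lemma inv_k_invr: "inv_k k w = invr k w"
proof (induction w)
  case Nil then show ?case by (simp add: inv_k_def)
next
  case (Cons x xs)
  have inj: "inj_on (\<lambda>(i,j). (Suc i, Suc j)) A" for A :: "(nat\<times>nat) set" by (auto simp: inj_on_def)
  have fin: "finite {(i,j). i < j \<and> j < length xs \<and> xs ! j < xs ! i \<and> xs ! i < xs ! j + k}"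
    by (rule finite_subset[of _ "{..<length xs} \<times> {..<length xs}"]) auto
  have "inv_k k (x#xs) = card ((\<lambda>j. (0::nat, Suc j)) ` {j. j < length xs \<and> xs ! j < x \<and> x < xs ! j + k})
     + card ((\<lambda>(i,j). (Suc i, Suc j)) ` {(i,j). i < j \<and> j < length xs \<and> xs ! j < xs ! i \<and> xs ! i < xs ! j + k})"
    unfolding inv_k_def inv_k_Cons_set
    by (rule card_Un_disjoint) (use fin in auto)
  also have "\<dots> = card {j. j < length xs \<and> xs ! j < x \<and> x < xs ! j + k} + inv_k k xs"
    unfolding inv_k_def by (subst card_image, simp add: inj_on_def)+ simp
  also have "card {j. j < length xs \<and> xs ! j < x \<and> x < xs ! j + k} = length (filter (\<lambda>y. y < x \<and> x < y + k) xs)"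
    by (simp add: length_filter_conv_card)
  finally show ?case using Cons by simp
qed

lemma invr_append: "invr k (xs @ ys) = invr k xs + invr k ys + sum_list (map (\<lambda>x. length (filter (\<lambda>y. y < x \<and> x < y + k) ys)) xs)"
  by (induction xs) auto

lemma length_filter_mset: assumes "mset T = mset T'" shows " length (filter P T) = length (filter P T')"
proof -
  have "size (mset (filter P T)) = size (mset (filter P T'))" using assms by (simp only: mset_filter)
  then show ?thesis by (simp only: size_mset)
qed

lemma sum_list_map_mset: fixes f :: "'b \<Rightarrow> nat" assumes "mset T = mset T'" shows "sum_list (map f T) = sum_list (map f T')"
proof -
  have "sum_list (map f T) = sum_mset (mset (map f T))" by (simp only: sum_mset_sum_list)
  also have "\<dots> = sum_mset (image_mset f (mset T))" by (simp only: mset_map)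
  also have "\<dots> = sum_mset (image_mset f (mset T'))" using assms by (simp only:)
  also have "\<dots> = sum_mset (mset (map f T'))" by (simp only: mset_map)
  finally show ?thesis by (simp only: sum_mset_sum_list)
qed

lemma invr_perm:
  assumes "mset T = mset T'" "invr k T = invr k T'"
  shows "invr k (u @ T @ s) = invr k (u @ T' @ s)"
proof -
  have l: "length (filter P (T @ s)) = length (filter P (T' @ s))" for P
    using length_filter_mset[OF assms(1), of P] by simp
  have h: "invr k (T @ s) = invr k (T' @ s)"
    unfolding invr_append by (simp only: assms(2) sum_list_map_mset[OF assms(1)])
  show ?thesis by (simp only: invr_append[of k u] l h)
qed

lemma invr_sw: "valid3 T \<Longrightarrow> invr k (sw k T) = invr k T"
  unfolding valid3_def by (elim exE conjE disjE) auto

lemma sw_char1: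
  assumes "a < b" "b < c"
    "(c - a > k \<and> ({T,T'} = {[b,a,c],[b,c,a]} \<or> {T,T'} = {[a,c,b],[c,a,b]})) \<or>
     (c - a \<le> k \<and> ({T,T'} = {[b,a,c],[a,c,b]} \<or> {T,T'} = {[b,c,a],[c,a,b]}))"
  shows "valid3 T \<and> T' = sw k T"
  using assms(3)
proof (elim disjE conjE)
  assume k: "k < c - a" and "{T,T'} = {[b,a,c],[b,c,a]}"
  then have "(T = [b,a,c] \<and> T' = [b,c,a]) \<or> (T = [b,c,a] \<and> T' = [b,a,c])" by (simp add: doubleton_eq_iff)
  then show ?thesis using assms(1,2) k by (auto simp: valid3_def)
next
  assume k: "k < c - a" and "{T,T'} = {[a,c,b],[c,a,b]}"
  then have "(T = [a,c,b] \<and> T' = [c,a,b]) \<or> (T = [c,a,b] \<and> T' = [a,c,b])" by (simp add: doubleton_eq_iff)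
  then show ?thesis using assms(1,2) k by (auto simp: valid3_def)
next
  assume k: "c - a \<le> k" and "{T,T'} = {[b,a,c],[a,c,b]}"
  then have "(T = [b,a,c] \<and> T' = [a,c,b]) \<or> (T = [a,c,b] \<and> T' = [b,a,c])" by (simp add: doubleton_eq_iff)
  then show ?thesis using assms(1,2) k by (auto simp: valid3_def)
next
  assume k: "c - a \<le> k" and "{T,T'} = {[b,c,a],[c,a,b]}"
  then have "(T = [b,c,a] \<and> T' = [c,a,b]) \<or> (T = [c,a,b] \<and> T' = [b,c,a])" by (simp add: doubleton_eq_iff)
  then show ?thesis using assms(1,2) k by (auto simp: valid3_def)
qed

lemma sw_char2:
  assumes "valid3 T"
  shows "\<exists>a b c. a < b \<and> b < c \<and>
    ((c - a > k \<and> ({T,sw k T} = {[b,a,c],[b,c,a]} \<or> {T,sw k T} = {[a,c,b],[c,a,b]})) \<or>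
     (c - a \<le> k \<and> ({T,sw k T} = {[b,a,c],[a,c,b]} \<or> {T,sw k T} = {[b,c,a],[c,a,b]})))"
proof -
  obtain p q r where T: "T = [p,q,r]" and c: "(q<p \<and> p<r) \<or> (r<p \<and> p<q) \<or> (p<r \<and> r<q) \<or> (q<r \<and> r<p)"
    using assms unfolding valid3_def by blast
  from c show ?thesis
  proof (elim disjE conjE)
    assume "q<p" "p<r" then show ?thesis using T by (intro exI[of _ q] exI[of _ p] exI[of _ r]) auto
  next
    assume "r<p" "p<q" then show ?thesis using T by (intro exI[of _ r] exI[of _ p] exI[of _ q]) auto
  next
    assume "p<r" "r<q" then show ?thesis using T by (intro exI[of _ p] exI[of _ r] exI[of _ q]) auto
  next
    assume "q<r" "r<p" then show ?thesis using T by (intro exI[of _ q] exI[of _ r] exI[of _ p]) auto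
  qed
qed

lemma valid3_sw_len: "valid3 T \<Longrightarrow> length (sw k T) = 3"
proof -
  assume "valid3 T"
  then have "valid3 (sw k T)" using sw_valid by blast
  then show ?thesis unfolding valid3_def by auto
qed

lemma decomp3: "m + 3 \<le> length w \<Longrightarrow> w = take m w @ [w!m, w!(m+1), w!(m+2)] @ drop (m+3) w"
proof -
  assume h: "m + 3 \<le> length w"
  have d: "drop m w = w!m # w!(m+1) # w!(m+2) # drop (m+3) w"
  proof -
    have 1: "drop m w = w!m # drop (Suc m) w" using h by (intro Cons_nth_drop_Suc[symmetric]) simp
    have 2: "drop (Suc m) w = w!(m+1) # drop (Suc (Suc m)) w" using h by (subst Cons_nth_drop_Suc[symmetric]) simp_all
    have 3: "drop (Suc (Suc m)) w = w!(m+2) # drop (m+3) w" using h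
      by (subst Cons_nth_drop_Suc[symmetric]) (simp_all add: numeral_3_eq_3 numeral_2_eq_2)
    show ?thesis by (simp only: 1 2 3)
  qed
  have "w = take m w @ drop m w" by simp
  also have "\<dots> = take m w @ [w!m, w!(m+1), w!(m+2)] @ drop (m+3) w" by (subst d) simp
  finally show ?thesis .
qed

lemma nth_splice3: "length T = 3 \<Longrightarrow> m + 3 \<le> length w \<Longrightarrow> j < length w \<Longrightarrow>
  (take m w @ T @ drop (m+3) w) ! j = (if j < m then w ! j else if j < m + 3 then T ! (j - m) else w ! j)"
  by (cases "j < m"; cases "j < m + 3") (auto simp: nth_append)



definition upd :: "nat \<Rightarrow> nat list \<Rightarrow> nat \<Rightarrow> nat list" where
  "upd k w i = take (i-2) w @ sw k (trip w i) @ drop (i+1) w"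

lemma trip_eq: "2 \<le> i \<Longrightarrow> trip w i = [w!(i-2), w!(i-2+1), w!(i-2+2)]"
proof -
  assume "2 \<le> i"
  then obtain m where i: "i = m + 2" by (metis le_add_diff_inverse2)
  show ?thesis unfolding trip_def i by simp
qed

lemma decompw: "2 \<le> i \<Longrightarrow> i + 1 \<le> length w \<Longrightarrow> w = take (i-2) w @ trip w i @ drop (i+1) w"
  using decomp3[of "i-2" w] trip_eq[of i w] by simp

lemma distinct_triple:
  assumes k: "0 < k" and g: "good k L" and r: "reach k L w L'" and m: "m + 3 \<le> length w"
  shows "w!m \<noteq> w!(m+1) \<and> w!(m+1) \<noteq> w!(m+2) \<and> w!m \<noteq> w!(m+2)"
proof -
  have "reach k L (take m w @ [w!m, w!(m+1), w!(m+2)] @ drop (m+3) w) L'"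
    using r decomp3[OF m] by simp
  then obtain M where M: "reach k L (take m w) M" "reach k M ([w!m, w!(m+1), w!(m+2)] @ drop (m+3) w) L'"
    unfolding reach_append by blast
  have gM: "good k M" using reach_good_tot[OF M(1) k g] by blast
  obtain M1 M2 M3 where a: "act_step k M (w!m) M1" "act_step k M1 (w!(m+1)) M2" "act_step k M2 (w!(m+2)) M3"
    using M(2) by auto
  have gM1: "good k M1" using act_good[OF k gM a(1)] .
  have 1: "w!m \<noteq> w!(m+1)"
  proof
    assume e: "w!m = w!(m+1)"
    show False by (rule no_repeat1[OF k gM a(1)]) (use a(2) e in simp)
  qed
  have 2: "w!(m+1) \<noteq> w!(m+2)"
  proof
    assume e: "w!(m+1) = w!(m+2)"
    show False by (rule no_repeat1[OF k gM1 a(2)]) (use a(3) e in simp)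
  qed
  have 3: "w!m \<noteq> w!(m+2)"
  proof
    assume e: "w!m = w!(m+2)"
    show False by (rule no_repeat2[OF k gM a(1) a(2)]) (use a(3) e in simp)
  qed
  show ?thesis using 1 2 3 by blast
qed

lemma valid_of_desc: "p \<noteq> q \<Longrightarrow> q \<noteq> r \<Longrightarrow> p \<noteq> r \<Longrightarrow> (q < p) \<noteq> (r < q) \<Longrightarrow> valid3 [p,q,r]"
  unfolding valid3_def by auto

lemma desc_of_valid: "valid3 [p,q,r] \<Longrightarrow> (q < p) \<noteq> (r < q)"
  unfolding valid3_def by auto

lemma one_descent_trip: "2 \<le> i \<Longrightarrow> one_descent w i \<longleftrightarrow> (trip w i ! 1 < trip w i ! 0) \<noteq> (trip w i ! 2 < trip w i ! 1)"
  unfolding one_descent_def trip_def by simp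

lemma valid3_cases: "valid3 T \<Longrightarrow> T = [T!0, T!1, T!2]"
  unfolding valid3_def by auto

lemma is_switch_sym: "is_switch k i w w' \<Longrightarrow> is_switch k i w' w"
proof -
  assume s: "is_switch k i w w'"
  have ins: "{trip w' i, trip w i} = {trip w i, trip w' i}" by (rule insert_commute)
  show ?thesis unfolding is_switch_def ins
  proof (intro conjI allI impI)
    show "length w' = length w" "2 \<le> i" using s unfolding is_switch_def by simp_all
    show "i + 1 \<le> length w'" using s unfolding is_switch_def by simp
    fix j assume "j < length w'" "j \<notin> {i - 2, i - 1, i}"
    then show "w' ! j = w ! j" using s unfolding is_switch_def by simp
  next
    show "\<exists>a b c. a < b \<and> b < c \<and>
        ((c - a > k \<and> ({trip w i, trip w' i} = {[b,a,c],[b,c,a]} \<or> {trip w i, trip w' i} = {[a,c,b],[c,a,b]})) \<or>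
         (c - a \<le> k \<and> ({trip w i, trip w' i} = {[b,a,c],[a,c,b]} \<or> {trip w i, trip w' i} = {[b,c,a],[c,a,b]})))"
      using s unfolding is_switch_def by blast
  qed
qed

lemma switch_upd:
  assumes v: "valid3 (trip w i)" and i: "2 \<le> i" "i + 1 \<le> length w"
  shows "is_switch k i w (upd k w i)"
proof -
  let ?T = "sw k (trip w i)"
  have l3: "length ?T = 3" using valid3_sw_len[OF v] .
  have m: "i - 2 + 3 \<le> length w" using i by simp
  have u: "upd k w i = take (i-2) w @ ?T @ drop (i-2+3) w" unfolding upd_def using i by simp
  have len: "length (upd k w i) = length w" unfolding u using l3 m by simp
  have nth: "j < length w \<Longrightarrow> upd k w i ! j = (if j < i-2 then w ! j else if j < i-2 + 3 then ?T ! (j - (i-2)) else w ! j)" for j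
    unfolding u by (rule nth_splice3[OF l3 m])
  have agree: "\<forall>j<length w. j \<notin> {i - 2, i - 1, i} \<longrightarrow> w ! j = upd k w i ! j"
    using nth i by auto
  have tr: "trip (upd k w i) i = ?T"
  proof -
    have "trip (upd k w i) i = [upd k w i ! (i-2), upd k w i ! (i-2+1), upd k w i ! (i-2+2)]"
      using trip_eq[OF i(1)] .
    also have "\<dots> = [?T!0, ?T!1, ?T!2]"
    proof -
      obtain m where im: "i = m + 2" using i(1) by (metis le_add_diff_inverse2)
      have "upd k w i ! m = ?T!0" "upd k w i ! (m+1) = ?T!1" "upd k w i ! (m+2) = ?T!2"
        using nth[of m] nth[of "m+1"] nth[of "m+2"] i im by simp_all
      then show ?thesis using im by simp
    qed
    also have "\<dots> = ?T" using valid3_cases[of ?T] sw_valid[OF v] by simp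
    finally show ?thesis .
  qed
  show ?thesis unfolding is_switch_def using len agree i sw_char2[OF v, of k] tr by simp
qed

lemma switch_det:
  assumes s: "is_switch k i w w'"
  shows "valid3 (trip w i) \<and> w' = upd k w i"
proof -
  have i: "2 \<le> i" "i + 1 \<le> length w" and len: "length w = length w'"
    and ag: "\<forall>j<length w. j \<notin> {i - 2, i - 1, i} \<longrightarrow> w ! j = w' ! j"
    using s unfolding is_switch_def by auto
  obtain a b c where "a < b" "b < c"
    "(c - a > k \<and> ({trip w i, trip w' i} = {[b,a,c],[b,c,a]} \<or> {trip w i, trip w' i} = {[a,c,b],[c,a,b]})) \<or>
     (c - a \<le> k \<and> ({trip w i, trip w' i} = {[b,a,c],[a,c,b]} \<or> {trip w i, trip w' i} = {[b,c,a],[c,a,b]}))"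
    using s unfolding is_switch_def by blast
  from sw_char1[OF this] have v: "valid3 (trip w i)" and t: "trip w' i = sw k (trip w i)" by auto
  have w': "w' = take (i-2) w' @ trip w' i @ drop (i+1) w'" using decompw[of i w'] i len by simp
  obtain m where im: "i = m + 2" using i(1) by (metis le_add_diff_inverse2)
  have tk: "take (i-2) w' = take (i-2) w"
  proof (rule nth_equalityI)
    show "length (take (i-2) w') = length (take (i-2) w)" using len by simp
    fix j assume "j < length (take (i-2) w')"
    then have "j < m" "j < length w" using im len by auto
    then show "take (i-2) w' ! j = take (i-2) w ! j" using ag im by simp
  qed
  have dr: "drop (i+1) w' = drop (i+1) w"
  proof (rule nth_equalityI)
    show "length (drop (i+1) w') = length (drop (i+1) w)" using len by simp
    fix j assume "j < length (drop (i+1) w')"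
    then have "i + 1 + j < length w" using len by auto
    then show "drop (i+1) w' ! j = drop (i+1) w ! j" using ag im len by simp
  qed
  show ?thesis using v w' tk dr t unfolding upd_def by simp
qed

lemma upd_invol: "valid3 (trip w i) \<Longrightarrow> 2 \<le> i \<Longrightarrow> i + 1 \<le> length w \<Longrightarrow> upd k (upd k w i) i = w"
proof -
  assume a: "valid3 (trip w i)" "2 \<le> i" "i + 1 \<le> length w"
  have "is_switch k i (upd k w i) w" by (rule is_switch_sym[OF switch_upd[OF a]])
  from switch_det[OF this] show ?thesis by simp
qed

lemma upd_set: "valid3 (trip w i) \<Longrightarrow> 2 \<le> i \<Longrightarrow> i + 1 \<le> length w \<Longrightarrow> set (upd k w i) = set w"
proof -
  assume v: "valid3 (trip w i)" and i: "2 \<le> i" "i + 1 \<le> length w"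
  have "set_mset (mset (sw k (trip w i))) = set_mset (mset (trip w i))" by (simp only: sw_mset)
  then have "set (sw k (trip w i)) = set (trip w i)" by (simp only: set_mset_mset)
  moreover have e: "take (i-2) w @ trip w i @ drop (i+1) w = w" by (rule sym[OF decompw[OF i]])
  have "set w = set (take (i-2) w @ trip w i @ drop (i+1) w)" by (simp only: e)
  ultimately show ?thesis unfolding upd_def by simp
qed

lemma upd_reach:
  assumes k: "0 < k" and g: "good k L" and v: "valid3 (trip w i)" and i: "2 \<le> i" "i + 1 \<le> length w"
    and r: "reach k L w L'"
  shows "reach k L (upd k w i) L'"
proof -
  have e: "take (i-2) w @ trip w i @ drop (i+1) w = w" by (rule sym[OF decompw[OF i]])
  have "reach k L (take (i-2) w @ trip w i @ drop (i+1) w) L'" using r by (simp only: e)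
  then obtain M where M: "reach k L (take (i-2) w) M" "reach k M (trip w i @ drop (i+1) w) L'"
    unfolding reach_append by blast
  have gM: "good k M" using reach_good_tot[OF M(1) k g] by blast
  have "reach k M (sw k (trip w i) @ drop (i+1) w) L'" by (rule reach_sw[OF k gM v M(2)])
  then show ?thesis unfolding upd_def reach_append using M(1) by blast
qed

lemma upd_inv: "valid3 (trip w i) \<Longrightarrow> 2 \<le> i \<Longrightarrow> i + 1 \<le> length w \<Longrightarrow> inv_k k (upd k w i) = inv_k k w"
proof -
  assume v: "valid3 (trip w i)" and i: "2 \<le> i" "i + 1 \<le> length w"
  have e: "take (i-2) w @ trip w i @ drop (i+1) w = w" by (rule sym[OF decompw[OF i]])
  have "inv_k k w = invr k (take (i-2) w @ trip w i @ drop (i+1) w)"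
    unfolding inv_k_invr by (simp only: e)
  also have "\<dots> = invr k (take (i-2) w @ sw k (trip w i) @ drop (i+1) w)"
    by (rule invr_perm) (use sw_mset invr_sw[OF v] in auto)
  finally show ?thesis unfolding upd_def inv_k_invr by simp
qed



theorem corollary4p16:
  fixes k N :: nat and mu nu :: "(nat \<times> nat) set list"
  assumes "0 < k" and "length mu = k" and "length nu = k"
    and "\<forall>r<k. young (mu ! r) \<and> young (nu ! r) \<and> nu ! r \<subseteq> mu ! r"
    and "\<forall>r<k. \<forall>z\<in>mu ! r - nu ! r. 1 \<le> content z * int k + int r \<and> content z * int k + int r \<le> int N"
  shows "\<forall>alpha t. coeff (LLT_G k N mu nu alpha) t = F_sb (Gamma_k k N mu nu t) alpha"
proof (intro allI)
  fix alpha t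
  have k: "0 < k" by fact
  have gnu: "good k nu" using assms(3,4) by (simp add: good_def)
  define W where "W = Wk k N mu nu"
  define n where "n = tot mu - tot nu"
  define V where "V = {v \<in> W. inv_k k v = t}"
  have Wr: "v \<in> W \<longleftrightarrow> set v \<subseteq> {1..N} \<and> reach k nu v mu" for v
    unfolding W_def by (rule Wk_reach)
  have lenW: "v \<in> W \<Longrightarrow> length v = n" for v
    using reach_good_tot[OF _ k gnu, of v mu] Wr[of v] unfolding n_def by auto
  have finW: "finite W"
    by (rule finite_subset[of _ "{xs. set xs \<subseteq> {1..N} \<and> length xs = n}"])
       (use Wr lenW in \<open>auto intro: finite_lists_length_eq\<close>)
  have VW: "V \<subseteq> W" unfolding V_def by auto
  have valid: "valid3 (trip w i)" if w: "w \<in> W" and i: "2 \<le> i" "i + 1 \<le> length w" and d: "one_descent w i" for w i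
  proof -
    have r: "reach k nu w mu" using w Wr by blast
    have "w!(i-2) \<noteq> w!(i-2+1) \<and> w!(i-2+1) \<noteq> w!(i-2+2) \<and> w!(i-2) \<noteq> w!(i-2+2)"
      by (rule distinct_triple[OF k gnu r]) (use i in simp)
    moreover have "(w!(i-2+1) < w!(i-2)) \<noteq> (w!(i-2+2) < w!(i-2+1))"
      using d one_descent_trip[OF i(1)] trip_eq[OF i(1)] by simp
    ultimately show ?thesis unfolding trip_eq[OF i(1)] by (intro valid_of_desc) auto
  qed
  have updV: "upd k w i \<in> V" if w: "w \<in> V" and i: "2 \<le> i" "i + 1 \<le> length w" and v: "valid3 (trip w i)" for w i
  proof -
    have wW: "w \<in> W" using w VW by auto
    have "set (upd k w i) \<subseteq> {1..N}" using upd_set[OF v i] wW Wr by simp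
    moreover have "reach k nu (upd k w i) mu" using upd_reach[OF k gnu v i] wW Wr by blast
    moreover have "inv_k k (upd k w i) = t" using upd_inv[OF v i] w V_def by simp
    ultimately show ?thesis unfolding V_def using Wr by blast
  qed
  define E where "E = {(i, {w, upd k w i}) | w i. w \<in> V \<and> 2 \<le> i \<and> i \<le> n - 1 \<and> one_descent w i}"
  have rng: "2 \<le> i \<Longrightarrow> i \<le> n - 1 \<Longrightarrow> i + 1 \<le> n" for i by simp
  have sb: "assaf_switchboard_n k n (V, E)"
    unfolding assaf_switchboard_n_def
  proof (intro conjI ballI allI impI)
    fix w assume "w \<in> fst (V, E)"
    then have wW: "w \<in> W" using VW by auto
    show "length w = n" using lenW[OF wW] .
    show "x \<noteq> 0" if "x \<in> set w" for x using wW Wr that by fastforce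
  next
    fix p assume "p \<in> snd (V, E)"
    then obtain w i where p: "p = (i, {w, upd k w i})" "w \<in> V" "2 \<le> i" "i \<le> n - 1" "one_descent w i"
      unfolding E_def by auto
    have wW: "w \<in> W" using p VW by auto
    have i1: "i + 1 \<le> length w" using lenW[OF wW] rng p by simp
    have v: "valid3 (trip w i)" using valid[OF wW p(3) i1 p(5)] .
    show "case p of (i, e) \<Rightarrow> 2 \<le> i \<and> i \<le> n - 1 \<and>
        (\<exists>w w'. e = {w, w'} \<and> w \<in> fst (V, E) \<and> w' \<in> fst (V, E) \<and> is_switch k i w w')"
      using p updV[OF p(2) p(3) i1 v] switch_upd[OF v p(3) i1] by auto
  next
    fix w i assume w: "w \<in> fst (V, E)" and h: "2 \<le> i \<and> i \<le> n - 1 \<and> one_descent w i"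
    have wV: "w \<in> V" using w by simp
    have wW: "w \<in> W" using wV VW by auto
    have i1: "i + 1 \<le> length w" using lenW[OF wW] rng h by simp
    have v: "valid3 (trip w i)" using valid[OF wW _ i1] h by simp
    show "\<exists>!e. (i, e) \<in> snd (V, E) \<and> w \<in> e"
    proof (rule ex1I[of _ "{w, upd k w i}"])
      show "(i, {w, upd k w i}) \<in> snd (V, E) \<and> w \<in> {w, upd k w i}" unfolding E_def using wV h by auto
    next
      fix e assume e: "(i, e) \<in> snd (V, E) \<and> w \<in> e"
      then obtain x where x: "e = {x, upd k x i}" "x \<in> V" "one_descent x i" unfolding E_def by auto
      have xW: "x \<in> W" using x VW by auto
      have xi1: "i + 1 \<le> length x" using lenW[OF xW] rng h by simp
      have vx: "valid3 (trip x i)" using valid[OF xW _ xi1 x(3)] h by simp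
      show "e = {w, upd k w i}"
      proof (cases "w = x")
        case True then show ?thesis using x by simp
      next
        case False
        then have "w = upd k x i" using e x by auto
        then have "upd k w i = x" using upd_invol[OF vx _ xi1] h by simp
        then show ?thesis using x \<open>w = upd k x i\<close> by auto
      qed
    qed
  qed
  have uniq: "G = (V, E)" if G: "assaf_switchboard k G \<and> fst G = V" for G
  proof -
    obtain n' where sn: "assaf_switchboard_n k n' G" using G unfolding assaf_switchboard_def by blast
    obtain VG EG where Gp: "G = (VG, EG)" by force
    have VG: "VG = V" using G Gp by simp
    have A: "\<forall>(i,e)\<in>EG. 2 \<le> i \<and> i \<le> n' - 1 \<and> (\<exists>w w'. e = {w, w'} \<and> w \<in> V \<and> w' \<in> V \<and> is_switch k i w w')"
      using sn VG Gp unfolding assaf_switchboard_n_def by simp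
    have B: "\<forall>w\<in>V. \<forall>i. 2 \<le> i \<and> i \<le> n' - 1 \<and> one_descent w i \<longrightarrow> (\<exists>!e. (i,e) \<in> EG \<and> w \<in> e)"
      using sn VG Gp unfolding assaf_switchboard_n_def by simp
    have A': "2 \<le> i \<and> i \<le> n' - 1 \<and> (\<exists>w w'. e = {w, w'} \<and> w \<in> V \<and> w' \<in> V \<and> is_switch k i w w')"
      if "(i,e) \<in> EG" for i e using bspec[OF A that] by simp
    have lenG: "\<forall>w\<in>V. length w = n'" using sn VG Gp unfolding assaf_switchboard_n_def by simp
    have edge: "e = {w, upd k w i} \<and> one_descent w i \<and> valid3 (trip w i)"
      if ie: "(i, e) \<in> EG" and we: "w \<in> e" for i e w
    proof -
      obtain a b where ab: "e = {a, b}" "a \<in> V" "b \<in> V" "is_switch k i a b" using A'[OF ie] by blast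
      have wab: "w = a \<or> w = b" using ab we by simp
      have s: "is_switch k i w (if w = a then b else a)"
      proof (cases "w = a")
        case True then show ?thesis using ab(4) by simp
      next
        case False then have "w = b" using wab by simp
        then show ?thesis using is_switch_sym[OF ab(4)] False by simp
      qed
      have "e = {w, if w = a then b else a}"
      proof (cases "w = a")
        case True then show ?thesis using ab(1) by simp
      next
        case False then have "w = b" using wab by simp
        then show ?thesis using ab(1) False by (simp add: insert_commute)
      qed
      moreover have "valid3 (trip w i)" and "(if w = a then b else a) = upd k w i" using switch_det[OF s] by auto
      moreover have "one_descent w i"
      proof -
        have i2: "2 \<le> i" using s unfolding is_switch_def by simp
        have vt: "valid3 (trip w i)" using switch_det[OF s] by simp
        have "valid3 [trip w i ! 0, trip w i ! 1, trip w i ! 2]" using vt valid3_cases[OF vt] by simp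
        then show ?thesis using desc_of_valid one_descent_trip[OF i2] by blast
      qed
      ultimately show ?thesis by simp
    qed
    show ?thesis
    proof (cases "V = {}")
      case True
      have "p \<notin> EG" for p
      proof
        assume p: "p \<in> EG"
        obtain i e where ie: "p = (i, e)" by force
        show False using A'[of i e] p ie True by blast
      qed
      then have "EG = {}" by blast
      moreover have "E = {}" using True unfolding E_def by auto
      ultimately show ?thesis using Gp VG by simp
    next
      case False
      then obtain w0 where "w0 \<in> V" by blast
      then have nn: "n' = n" using lenG lenW[of w0] VW by auto
      have "EG = E"
      proof
        show "EG \<subseteq> E"
        proof
          fix p assume p: "p \<in> EG"
          obtain i e where ie: "p = (i, e)" by force
          have pe: "(i, e) \<in> EG" using p ie by simp
          obtain a b where ab: "e = {a, b}" "a \<in> V" "is_switch k i a b" using A'[OF pe] by blast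
          have "e = {a, upd k a i} \<and> one_descent a i" using edge[OF pe, of a] ab by simp
          moreover have "2 \<le> i \<and> i \<le> n - 1" using A'[OF pe] nn by simp
          ultimately show "p \<in> E" unfolding E_def using ie ab by blast
        qed
      next
        show "E \<subseteq> EG"
        proof
          fix p assume "p \<in> E"
          then obtain w i where p: "p = (i, {w, upd k w i})" "w \<in> V" "2 \<le> i" "i \<le> n - 1" "one_descent w i"
            unfolding E_def by auto
          have "\<exists>!e. (i,e) \<in> EG \<and> w \<in> e" using B p nn by simp
          then obtain e where e: "(i, e) \<in> EG" "w \<in> e" by blast
          then have "e = {w, upd k w i}" using edge[OF e] by simp
          then show "p \<in> EG" using e p by simp
        qed
      qed
      then show ?thesis using Gp VG by simp
    qed
  qed
  have ex1: "\<exists>!G. assaf_switchboard k G \<and> fst G = V"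
    by (rule ex1I[of _ "(V, E)"]) (use sb uniq in \<open>auto simp: assaf_switchboard_def\<close>)
  have "fst (Gamma_k k N mu nu t) = V"
    unfolding Gamma_k_def using theI'[OF ex1[unfolded V_def W_def]] V_def W_def by simp
  then have R: "F_sb (Gamma_k k N mu nu t) alpha = (\<Sum>w\<in>V. gessel_Q (length w) (Des w) alpha)"
    unfolding F_sb_def by simp
  have "coeff (LLT_G k N mu nu alpha) t = (\<Sum>v\<in>W. if inv_k k v = t then gessel_Q (length v) (Des v) alpha else 0)"
    unfolding LLT_G_def W_def coeff_sum by (intro sum.cong) auto
  also have "\<dots> = (\<Sum>w\<in>V. gessel_Q (length w) (Des w) alpha)"
    unfolding V_def using finW by (simp add: sum.inter_filter)
  finally show "coeff (LLT_G k N mu nu alpha) t = F_sb (Gamma_k k N mu nu t) alpha" using R by simp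
qed

end
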